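(* In the setting below, assume $Z^j\epsilon_{\bullet,j}\ne0$ for all $j$, $$\lambda\ge3\max_{i\in[n]}\Big(\sum_{j\in[p]}\frac{(Z^j_{i,\bullet}\epsilon_{\bullet,j})^2}{\|Z^j\epsilon_{\bullet,j}\|_2^2}\Big)^{1/2},$$ and $|O|(\lambda^2+\alpha)<1/10$, where $\alpha=\|I_n-Z\|_{\infty,\infty}$. Then $$\|\widehat\Delta\|_{2,2}\le140\lambda\|\xi^\top\|_{2,\infty}|O|^{1/2}\quad\text{and}\quad p^{-1/2}\|\widehat\Delta\|_{1,1}\le\|\widehat\Delta\|_{2,1}\le520\lambda\|\xi^\top\|_{2,\infty}|O|.$$
   Context: Setting. Let $n,p\ge 1$, $[n]=\{1,\dots,n\}$. $X=Y+E^*\in\mathbb R^{n\times p}$ where (C1) the rows of $Y$ are independent $\mathcal N_p(\mu^*,\Sigma^* )$, $\Sigma^*$ positive definite; (C2) $E^*$ deterministic, $[n]=I\cup O$ a partition with the rows of $E^*$ indexed by $I$ equal to zero, and every row of $E^*(\Sigma^* )^{-1/2}$ of Euclidean norm at most $M_E\sqrt p$; $\mu^*=0$. $\Omega^*=(\Sigma^* )^{-1}$ with diagonal entries $\omega^*_{jj}$, $B^*=\Omega^*\mathrm{diag}(\Omega^* )^{-1}$, $X^{(n)}=X/\sqrt n$, $\Theta^*=E^*B^*/\sqrt n$, $\xi=X^{(n)}B^*-\Theta^*$, $\epsilon_{ij}=\sqrt n(\omega^*_{jj})^{1/2}\xi_{ij}$. Notation: $A_{i,\bullet}$, $A_{\bullet,j}$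 rows/columns, $j^c=[p]\setminus\{j\}$, $\|A\|_{q_1,q_2}=(\sum_i\|A_{i,\bullet}\|_{q_1}^{q_2})^{1/q_2}$, $\|A\|_{\infty,\infty}=\max_{i,j}|A_{ij}|$, $\|\xi^\top\|_{2,\infty}=\max_j\|\xi_{\bullet,j}\|_2$. $Z^j$ is the orthogonal projector in $\mathbb R^n$ onto the orthogonal complement of the span of the columns of $X_{\bullet,j^c}$, and $Z=I_n-X(X^\top X)^\dagger X^\top$ ($\dagger$ = Moore–Penrose pseudo-inverse). Estimator: $\widehat\Theta$ minimizes over $\Theta\in\mathbb R^{n\times p}$ the function $\sum_{j=1}^p\|Z^j(X^{(n)}_{\bullet,j}-\Theta_{\bullet,j})\|_2+\lambda\|\Theta\|_{2,1}$, and $\widehat\Delta=\widehat\Theta-\Theta^*$. *)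

theory Defs
  imports "HOL-Analysis.Analysis"
begin

text \<open>Matrices are rendered as real^'c^'r (rows indexed by 'r, columns by 'c);
 A $ i is the i-th row, column j A is the j-th column.\<close>

definition pos_def_mat :: "real^'p^'p \<Rightarrow> bool" where
  "pos_def_mat A \<longleftrightarrow> transpose A = A \<and> (\<forall>x. x \<noteq> 0 \<longrightarrow> x \<bullet> (A *v x) > 0)"

definition psd_mat :: "real^'p^'p \<Rightarrow> bool" where
  "psd_mat A \<longleftrightarrow> transpose A = A \<and> (\<forall>x. x \<bullet> (A *v x) \<ge> 0)"

definition msqrt :: "real^'p^'p \<Rightarrow> real^'p^'p" where
  "msqrt A = (THE S. psd_mat S \<and> S ** S = A)"

definition pinv :: "real^'n^'m \<Rightarrow> real^'m^'n" where
  "pinv A = (THE G. A ** G ** A = A \<and> G ** A ** G = G \<and>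
      transpose (A ** G) = A ** G \<and> transpose (G ** A) = G ** A)"

definition proj_orth_compl :: "(real^'n) set \<Rightarrow> real^'n^'n" where
  "proj_orth_compl S = (THE P. \<forall>v. (\<forall>u\<in>S. (P *v v) \<bullet> u = 0) \<and> v - P *v v \<in> span S)"

definition Zj :: "real^'p^'n \<Rightarrow> 'p \<Rightarrow> real^'n^'n" where
  "Zj X j = proj_orth_compl {column k X | k. k \<noteq> j}"

definition Zfull :: "real^'p^'n \<Rightarrow> real^'n^'n" where
  "Zfull X = mat 1 - X ** pinv (transpose X ** X) ** transpose X"

definition norm22 :: "real^'p^'n \<Rightarrow> real" where
  "norm22 A = sqrt (\<Sum>i\<in>UNIV. (norm (A $ i))\<^sup>2)"

definition norm21 :: "real^'p^'n \<Rightarrow> real" where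
  "norm21 A = (\<Sum>i\<in>UNIV. norm (A $ i))"

definition norm11 :: "real^'p^'n \<Rightarrow> real" where
  "norm11 A = (\<Sum>i\<in>UNIV. \<Sum>j\<in>UNIV. \<bar>A $ i $ j\<bar>)"

definition norm_inf_inf :: "real^'p^'n \<Rightarrow> real" where
  "norm_inf_inf A = Max {\<bar>A $ i $ j\<bar> | i j. True}"

text \<open>\<parallel>A^T\<parallel>_{2,\<infinity>} = max_j \<parallel>A_{.,j}\<parallel>_2.\<close>
definition normT2inf :: "real^'p^'n \<Rightarrow> real" where
  "normT2inf A = Max {norm (column j A) | j. True}"

text \<open>B* = \<Omega>* diag(\<Omega>*)^{-1}.\<close>
definition Bmat :: "real^'p^'p \<Rightarrow> real^'p^'p" where
  "Bmat Om = (\<chi> i j. Om $ i $ j / Om $ j $ j)"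

definition objective :: "real^'p^'n \<Rightarrow> real \<Rightarrow> real^'p^'n \<Rightarrow> real" where
  "objective X lam Th =
     (\<Sum>j\<in>UNIV. norm (Zj X j *v ((1 / sqrt (real CARD('n))) *\<^sub>R column j X - column j Th)))
     + lam * norm21 Th"

end

theory Submission
  imports Defs
begin


definition isproj :: "real^'n^'n \<Rightarrow> (real^'n) set \<Rightarrow> bool" where
  "isproj P S \<longleftrightarrow> (\<forall>v. P *v v \<in> span S \<and> (\<forall>u\<in>span S. (v - P *v v) \<bullet> u = 0))"

lemma proj_exists: "\<exists>P::real^'n^'n. isproj P S"
proof -
  obtain B where BS: "B \<subseteq> span S" and orth: "pairwise orthogonal B"
    and n1: "\<And>x. x \<in> B \<Longrightarrow> norm x = 1" and ind: "independent B" and "card B = dim (span S)" and sp: "span B = span S"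
    using orthonormal_basis_subspace[OF subspace_span[of S]] by metis
  have fin: "finite B" using ind by (rule finiteI_independent)
  define P :: "real^'n^'n" where "P = (\<chi> i k. \<Sum>b\<in>B. b$i * b$k)"
  have Pv: "P *v v = (\<Sum>b\<in>B. (b \<bullet> v) *\<^sub>R b)" for v
    by (simp add: P_def vec_eq_iff matrix_vector_mult_def inner_vec_def sum_distrib_left
        sum_distrib_right sum_component mult_ac) (subst sum.swap, simp)
  have "isproj P S"
    unfolding isproj_def
  proof (intro allI conjI ballI)
    fix v
    show "P *v v \<in> span S" unfolding Pv sp[symmetric]
      by (intro span_sum span_scale) (simp add: span_base)
    have ob: "(v - P *v v) \<bullet> b' = 0" if b': "b' \<in> B" for b'
    proof -
      have "(P *v v) \<bullet> b' = (\<Sum>b\<in>B. (b \<bullet> v) * (b \<bullet> b'))"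
        by (simp add: Pv inner_sum_left)
      also have "\<dots> = (\<Sum>b\<in>B. if b = b' then b' \<bullet> v else 0)"
      proof (rule sum.cong)
        fix b assume b: "b \<in> B"
        show "(b \<bullet> v) * (b \<bullet> b') = (if b = b' then b' \<bullet> v else 0)"
        proof (cases "b = b'")
          case True
          have "b' \<bullet> b' = 1" using n1[OF b'] by (simp add: norm_eq_1)
          thus ?thesis using True by simp
        next
          case False
          then have "b \<bullet> b' = 0" using orth b b' by (auto simp: pairwise_def orthogonal_def)
          thus ?thesis using False by simp
        qed
      qed simp
      also have "\<dots> = b' \<bullet> v" using fin b' by simp
      finally show ?thesis by (simp add: inner_diff_left inner_diff_right inner_commute)
    qed
    fix u assume "u \<in> span S"
    then have "u \<in> span B" using sp by simp
    then show "(v - P *v v) \<bullet> u = 0"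
      using orthogonal_to_span[of u B "v - P *v v"] ob by (auto simp: orthogonal_def)
  qed
  thus ?thesis by blast
qed


lemma mv_diff_l: "(A - B) *v v = A *v v - B *v (v::real^'n)"
  by (simp add: matrix_vector_mult_def vec_eq_iff sum_subtractf left_diff_distrib)
lemma mv_add_l: "(A + B) *v v = A *v v + B *v (v::real^'n)"
  by (simp add: matrix_vector_mult_def vec_eq_iff sum.distrib distrib_right)

lemma isproj_unique:
  assumes "isproj P S" "isproj Q S" shows "P = Q"
proof -
  have "P *v v = Q *v v" for v
  proof -
    let ?w = "P *v v - Q *v v"
    have ws: "?w \<in> span S" using assms by (simp add: isproj_def span_diff)
    have "?w = (v - Q *v v) - (v - P *v v)" by simp
    hence "?w \<bullet> ?w = (v - Q *v v) \<bullet> ?w - (v - P *v v) \<bullet> ?w"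
      by (metis inner_diff_left)
    also have "\<dots> = 0" using assms ws unfolding isproj_def by simp
    finally show ?thesis by simp
  qed
  thus ?thesis by (subst matrix_eq) blast
qed

lemma isproj_in: "isproj P S \<Longrightarrow> P *v v \<in> span S"
  by (simp add: isproj_def)
lemma isproj_orth: "isproj P S \<Longrightarrow> u \<in> span S \<Longrightarrow> (v - P *v v) \<bullet> u = 0"
  by (simp add: isproj_def)

lemma isproj_fix: assumes "isproj P S" "u \<in> span S" shows "P *v u = u"
proof -
  have "(u - P *v u) \<in> span S" using assms by (simp add: isproj_def span_diff)
  hence "(u - P *v u) \<bullet> (u - P *v u) = 0" using assms isproj_orth by blast
  thus ?thesis by simp
qed

lemma isproj_sym: assumes "isproj P S" shows "(P *v v) \<bullet> w = v \<bullet> (P *v w)"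
proof -
  have a: "(v - P *v v) \<bullet> (P *v w) = 0" using assms isproj_orth isproj_in by blast
  have b: "(w - P *v w) \<bullet> (P *v v) = 0" using assms isproj_orth isproj_in by blast
  have "v \<bullet> (P *v w) = (P *v v) \<bullet> (P *v w)" using a by (simp add: inner_diff_left)
  moreover have "w \<bullet> (P *v v) = (P *v w) \<bullet> (P *v v)" using b by (simp add: inner_diff_left)
  ultimately show ?thesis by (metis inner_commute)
qed

lemma isproj_idem: "isproj P S \<Longrightarrow> P *v (P *v v) = P *v v"
  using isproj_fix isproj_in by blast

lemma isproj_norm2: assumes "isproj P S" shows "(P *v v) \<bullet> (P *v v) = v \<bullet> (P *v v)"
  using isproj_sym[OF assms, of v "P *v v"] isproj_idem[OF assms] by simp

lemma isproj_kill: assumes "isproj P S" "\<forall>u\<in>span S. v \<bullet> u = 0" shows "P *v v = 0"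
proof -
  have "P *v v \<in> span S" using assms isproj_in by blast
  hence "v \<bullet> (P *v v) = 0" using assms by blast
  hence "(P *v v) \<bullet> (P *v v) = 0" using isproj_norm2[OF assms(1)] by simp
  thus ?thesis by simp
qed

lemma vec_eq_by_inner: fixes x y :: "real^'n" assumes "\<And>z. x \<bullet> z = y \<bullet> z" shows "x = y"
proof -
  have "(x - y) \<bullet> (x - y) = 0" using assms[of "x - y"] by (simp add: inner_diff_left)
  thus ?thesis by simp
qed

lemma isproj_transpose: assumes "isproj P S" shows "transpose P = P"
proof -
  have "transpose P *v v = P *v v" for v
  proof (rule vec_eq_by_inner)
    fix z
    have "(transpose P *v v) \<bullet> z = (v v* P) \<bullet> z" using vector_transpose_matrix[of v "transpose P"] by simp
    also have "\<dots> = v \<bullet> (P *v z)" by (rule dot_lmul_matrix)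
    also have "\<dots> = (P *v v) \<bullet> z" using isproj_sym[OF assms] by simp
    finally show "(transpose P *v v) \<bullet> z = (P *v v) \<bullet> z" .
  qed
  thus ?thesis by (subst matrix_eq) blast
qed

lemma orth_span: fixes w :: "real^'n" assumes "\<forall>u\<in>S. w \<bullet> u = 0" "u \<in> span S" shows "w \<bullet> u = 0"
  using orthogonal_to_span[of u S w] assms by (auto simp: orthogonal_def)

lemma proj_orth_compl_eq: fixes S :: "(real^'n) set" assumes "isproj P S" shows "proj_orth_compl S = mat 1 - P"
  unfolding proj_orth_compl_def
proof (rule the_equality)
  show "\<forall>v. (\<forall>u\<in>S. ((mat 1 - P) *v v) \<bullet> u = 0) \<and> v - (mat 1 - P) *v v \<in> span S"
    using assms by (auto simp: mv_diff_l isproj_def intro: span_base)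
next
  fix Q :: "real^'n^'n"
  assume Q: "\<forall>v. (\<forall>u\<in>S. (Q *v v) \<bullet> u = 0) \<and> v - Q *v v \<in> span S"
  have "isproj (mat 1 - Q) S" unfolding isproj_def
  proof (intro allI conjI ballI)
    fix v u assume "u \<in> span S"
    thus "(v - (mat 1 - Q) *v v) \<bullet> u = 0" using Q orth_span[of S "Q *v v" u] by (simp add: mv_diff_l)
  qed (use Q in \<open>simp add: mv_diff_l\<close>)
  hence "mat 1 - Q = P" using isproj_unique assms by blast
  thus "Q = mat 1 - P" by (metis add_diff_cancel_left' diff_add_cancel)
qed




lemma mm_ldiff: "(A::real^'n^'m) ** (B - C) = A ** B - A ** C"
  by (simp add: matrix_matrix_mult_def vec_eq_iff sum_subtractf right_diff_distrib)
lemma mm_rdiff: "((A::real^'n^'m) - B) ** C = A ** C - B ** C"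
  by (simp add: matrix_matrix_mult_def vec_eq_iff sum_subtractf left_diff_distrib)
lemma mm_radd: "((A::real^'n^'m) + B) ** C = A ** C + B ** C"
  by (simp add: matrix_matrix_mult_def vec_eq_iff sum.distrib distrib_right)
lemma tr_diff: "transpose ((A::real^'n^'m) - B) = transpose A - transpose B"
  by (simp add: transpose_def vec_eq_iff)
lemma tr_add: "transpose ((A::real^'n^'m) + B) = transpose A + transpose B"
  by (simp add: transpose_def vec_eq_iff)

lemma tr_zero: "transpose (0::real^'n^'m) = 0"
  by (simp add: transpose_def vec_eq_iff)

definition penrose :: "real^'n^'m \<Rightarrow> real^'m^'n \<Rightarrow> bool" where
  "penrose A G \<longleftrightarrow> A ** G ** A = A \<and> G ** A ** G = G \<and>
      transpose (A ** G) = A ** G \<and> transpose (G ** A) = G ** A"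

lemma penrose_unique:
  assumes p1: "penrose A G1" and p2: "penrose A G2" shows "G1 = G2"
proof -
  from p1 have a1: "A ** G1 ** A = A" and b1: "G1 ** A ** G1 = G1"
    and c1: "transpose (A ** G1) = A ** G1" and d1: "transpose (G1 ** A) = G1 ** A"
    by (auto simp: penrose_def)
  from p2 have a2: "A ** G2 ** A = A" and b2: "G2 ** A ** G2 = G2"
    and c2: "transpose (A ** G2) = A ** G2" and d2: "transpose (G2 ** A) = G2 ** A"
    by (auto simp: penrose_def)
  have tA: "transpose A = transpose A ** transpose G2 ** transpose A"
    using arg_cong[OF a2, of transpose] by (simp add: matrix_transpose_mul matrix_mul_assoc)
  have "G1 = G1 ** (A ** G1)" using b1 by (simp add: matrix_mul_assoc)
  also have "\<dots> = G1 ** (transpose G1 ** transpose A)" using c1 by (simp add: matrix_transpose_mul)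
  also have "\<dots> = G1 ** (transpose G1 ** (transpose A ** transpose G2 ** transpose A))"
    by (simp only: tA[symmetric])
  also have "\<dots> = G1 ** (transpose (A ** G1) ** transpose (A ** G2))"
    by (simp add: matrix_transpose_mul matrix_mul_assoc)
  also have "\<dots> = G1 ** A ** G1 ** A ** G2" using c1 c2 by (simp add: matrix_mul_assoc)
  also have "\<dots> = G1 ** A ** G2" using b1 by simp
  finally have e1: "G1 = G1 ** A ** G2" .
  have tA': "transpose A = transpose A ** transpose G1 ** transpose A"
    using arg_cong[OF a1, of transpose] by (simp add: matrix_transpose_mul matrix_mul_assoc)
  have "G2 = (G2 ** A) ** G2" using b2 by (simp add: matrix_mul_assoc)
  also have "\<dots> = (transpose A ** transpose G2) ** G2" using d2 by (simp add: matrix_transpose_mul)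
  also have "\<dots> = ((transpose A ** transpose G1 ** transpose A) ** transpose G2) ** G2"
    by (simp only: tA'[symmetric])
  also have "\<dots> = (transpose (G1 ** A) ** transpose (G2 ** A)) ** G2"
    by (simp add: matrix_transpose_mul matrix_mul_assoc)
  also have "\<dots> = G1 ** A ** (G2 ** A ** G2)" using d1 d2 by (simp add: matrix_mul_assoc)
  also have "\<dots> = G1 ** A ** G2" using b2 by simp
  finally show ?thesis using e1 by simp
qed

lemma sym_inner: assumes "transpose A = A" shows "(A *v x) \<bullet> y = x \<bullet> (A *v (y::real^'n))"
proof -
  have "(A *v x) \<bullet> y = (x v* A) \<bullet> y"
    using vector_transpose_matrix[of x A] assms by simp
  thus ?thesis by (simp add: dot_lmul_matrix)
qed

lemma penrose_exists_sym:
  fixes A :: "real^'p^'p" assumes At: "transpose A = A"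
  shows "\<exists>G. penrose A G"
proof -
  define K where "K = {v. A *v v = 0}"
  have subK: "subspace K" unfolding K_def subspace_def
    by (simp add: matrix_vector_right_distrib matrix_vector_mult_scaleR)
  obtain Q where Q: "isproj Q K" using proj_exists by blast
  have spK: "span K = K" using subK by (simp add: span_eq_iff)
  have QK: "A *v (Q *v v) = 0" for v
  proof -
    have "Q *v v \<in> K" using isproj_in[OF Q, of v] spK by simp
    thus ?thesis by (simp add: K_def)
  qed
  have AQ: "A ** Q = 0" by (subst matrix_eq) (simp add: QK flip: matrix_vector_mul_assoc)
  have Qt: "transpose Q = Q" using isproj_transpose[OF Q] .
  have QA: "Q ** A = 0"
    using arg_cong[OF AQ, of transpose] At Qt by (simp add: matrix_transpose_mul tr_zero)
  have QQ: "Q ** Q = Q"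
    by (subst matrix_eq) (simp add: isproj_idem[OF Q] flip: matrix_vector_mul_assoc)
  define C where "C = A + Q"
  have inj: "inj ((*v) C)"
  proof (rule linear_injective_0[THEN iffD2])
    show "linear ((*v) C)" by (rule matrix_vector_mul_linear)
    show "\<forall>v. C *v v = 0 \<longrightarrow> v = 0"
    proof (intro allI impI)
      fix v assume Cv: "C *v v = 0"
      have "(Q *v v) \<bullet> (C *v v) = (A *v v) \<bullet> (Q *v v) + (Q *v v) \<bullet> (Q *v v)"
        by (simp add: C_def mv_add_l inner_add_right inner_commute)
      also have "(A *v v) \<bullet> (Q *v v) = 0" using sym_inner[OF At, of v "Q *v v"] QK by simp
      finally have "(Q *v v) \<bullet> (Q *v v) = 0" using Cv by simp
      hence Qv: "Q *v v = 0" by simp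
      hence "A *v v = 0" using Cv by (simp add: C_def mv_add_l)
      hence "v \<in> span K" by (simp add: K_def span_base)
      hence "Q *v v = v" by (rule isproj_fix[OF Q])
      thus "v = 0" using Qv by simp
    qed
  qed
  then obtain H where HC: "H ** C = mat 1" using matrix_left_invertible_injective by blast
  have CH: "C ** H = mat 1" using HC matrix_left_right_inverse by blast
  have CQ: "C ** Q = Q" by (simp add: C_def mm_radd AQ QQ)
  have QC: "Q ** C = Q" by (simp add: C_def matrix_add_ldistrib QA QQ)
  have HQ: "H ** Q = Q" by (metis CQ HC matrix_mul_assoc matrix_mul_lid)
  have QH: "Q ** H = Q" by (metis QC CH matrix_mul_assoc matrix_mul_rid)
  have AH: "A ** H = mat 1 - Q"
  proof -
    have "A = C - Q" by (simp add: C_def)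
    hence "A ** H = C ** H - Q ** H" by (simp add: mm_rdiff)
    thus ?thesis using CH QH by simp
  qed
  have HA: "H ** A = mat 1 - Q"
  proof -
    have "A = C - Q" by (simp add: C_def)
    hence "H ** A = H ** C - H ** Q" by (simp add: mm_ldiff)
    thus ?thesis using HC HQ by simp
  qed
  define G where "G = H - Q"
  have AG: "A ** G = mat 1 - Q" by (simp add: G_def mm_ldiff AH AQ)
  have GA: "G ** A = mat 1 - Q" by (simp add: G_def mm_rdiff HA QA)
  have "penrose A G" unfolding penrose_def
  proof (intro conjI)
    show "A ** G ** A = A" by (simp add: AG mm_rdiff QA)
    have QG: "Q ** G = 0" by (simp add: G_def mm_ldiff QH QQ)
    show "G ** A ** G = G" unfolding GA by (simp add: mm_rdiff QG)
    show "transpose (A ** G) = A ** G" by (simp add: AG tr_diff Qt)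
    show "transpose (G ** A) = G ** A" by (simp add: GA tr_diff Qt)
  qed
  thus ?thesis by blast
qed

lemma pinv_sym:
  fixes A :: "real^'p^'p" assumes At: "transpose A = A"
  shows "penrose A (pinv A)"
proof -
  obtain G where G: "penrose A G" using penrose_exists_sym[OF At] by blast
  have "pinv A = G" unfolding pinv_def
  proof (rule the_equality)
    show "A ** G ** A = A \<and> G ** A ** G = G \<and> transpose (A ** G) = A ** G \<and> transpose (G ** A) = G ** A"
      using G by (simp only: penrose_def)
  next
    fix G' assume "A ** G' ** A = A \<and> G' ** A ** G' = G' \<and> transpose (A ** G') = A ** G' \<and> transpose (G' ** A) = G' ** A"
    hence "penrose A G'" by (simp only: penrose_def)
    thus "G' = G" using penrose_unique[OF G] by simp
  qed
  thus ?thesis using G by simp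
qed




lemma normsq: "(norm (v::real^'n))^2 = (\<Sum>j\<in>UNIV. (v$j)^2)"
  unfolding power2_norm_eq_inner by (simp add: inner_vec_def power2_eq_square)

lemma norm_sum_sq: "(norm (\<Sum>i\<in>UNIV. F i :: real^'n))^2 \<le> (\<Sum>i\<in>UNIV. norm (F i))^2"
  by (rule power_mono[OF norm_sum]) simp

lemma hadamard: "norm (\<chi> j. x$j * y$j) \<le> norm x * norm (y::real^'n)"
proof -
  have "(norm (\<chi> j. x$j * y$j))^2 = (\<Sum>j\<in>UNIV. (x$j)^2 * (y$j)^2)"
    by (simp add: normsq power_mult_distrib)
  also have "\<dots> \<le> (\<Sum>j\<in>UNIV. (x$j)^2 * (norm y)^2)"
  proof (rule sum_mono)
    fix j
    have "\<bar>y$j\<bar> \<le> norm y" by (rule component_le_norm_cart)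
    hence "(y$j)^2 \<le> (norm y)^2" by (metis abs_ge_zero power2_abs power_mono)
    thus "(x$j)^2 * (y$j)^2 \<le> (x$j)^2 * (norm y)^2" by (simp add: mult_left_mono)
  qed
  also have "\<dots> = (norm x * norm y)^2" by (simp add: normsq sum_distrib_right power_mult_distrib)
  finally show ?thesis by (rule power2_le_imp_le) simp
qed

lemma isproj_pyth: assumes "isproj R W"
  shows "(norm v)^2 = (norm (v - R *v v))^2 + (norm (R *v v))^2"
proof -
  have o: "(v - R *v v) \<bullet> (R *v v) = 0" using assms isproj_orth isproj_in by blast
  have o': "v \<bullet> (R *v v) = (R *v v) \<bullet> (R *v v)" using o by (simp add: inner_diff_left)
  have "(norm (v - R *v v))^2 = v \<bullet> v - 2 * (v \<bullet> (R *v v)) + (R *v v) \<bullet> (R *v v)"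
    by (simp add: power2_norm_eq_inner inner_diff_left inner_diff_right inner_commute)
  thus ?thesis using o' by (simp add: power2_norm_eq_inner)
qed

lemma isproj_le1: assumes "isproj R W" shows "norm (R *v v) \<le> norm v"
proof -
  have "(norm (R *v v))^2 \<le> (norm v)^2" using isproj_pyth[OF assms, of v] by simp
  thus ?thesis by (rule power2_le_imp_le) simp
qed
lemma isproj_le2: assumes "isproj R W" shows "norm (v - R *v v) \<le> norm v"
proof -
  have "(norm (v - R *v v))^2 \<le> (norm v)^2" using isproj_pyth[OF assms, of v] by simp
  thus ?thesis by (rule power2_le_imp_le) simp
qed

lemma isproj_mono:
  assumes R: "isproj R W" and P: "isproj P C" and WC: "W \<subseteq> span C"
  shows "(norm (R *v v))^2 \<le> v \<bullet> (P *v v)"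
proof -
  have spW: "span W \<subseteq> span C" using WC by (simp add: span_minimal)
  have "R *v (v - P *v v) = 0"
    using isproj_kill[OF R] isproj_orth[OF P] spW by blast
  hence Rv: "R *v v = R *v (P *v v)" by (simp add: matrix_vector_mult_diff_distrib)
  have "norm (R *v v) \<le> norm (P *v v)" unfolding Rv by (rule isproj_le1[OF R])
  hence "(norm (R *v v))^2 \<le> (norm (P *v v))^2" by (simp add: power_mono)
  also have "\<dots> = v \<bullet> (P *v v)" using isproj_norm2[OF P] by (simp add: power2_norm_eq_inner)
  finally show ?thesis .
qed

lemma quad_bound:
  assumes "\<forall>i k. \<bar>M$i$k\<bar> \<le> al"
  shows "v \<bullet> (M *v v) \<le> al * (\<Sum>i\<in>UNIV. \<bar>(v::real^'n)$i\<bar>)^2"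
proof -
  have "v \<bullet> (M *v v) = (\<Sum>i\<in>UNIV. \<Sum>k\<in>UNIV. v$i * M$i$k * v$k)"
    by (simp add: inner_vec_def matrix_vector_mult_def sum_distrib_left mult_ac)
  also have "\<dots> \<le> (\<Sum>i\<in>UNIV. \<Sum>k\<in>UNIV. al * (\<bar>v$i\<bar> * \<bar>v$k\<bar>))"
  proof (intro sum_mono)
    fix i k
    have "v$i * M$i$k * v$k \<le> \<bar>v$i * M$i$k * v$k\<bar>" by simp
    also have "\<dots> = \<bar>M$i$k\<bar> * (\<bar>v$i\<bar> * \<bar>v$k\<bar>)" by (simp add: abs_mult)
    also have "\<dots> \<le> al * (\<bar>v$i\<bar> * \<bar>v$k\<bar>)" using assms by (simp add: mult_right_mono)
    finally show "v$i * M$i$k * v$k \<le> al * (\<bar>v$i\<bar> * \<bar>v$k\<bar>)" .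
  qed
  also have "\<dots> = al * (\<Sum>i\<in>UNIV. \<bar>v$i\<bar>)^2"
    by (simp add: power2_eq_square sum_distrib_left sum_distrib_right mult_ac)
  finally show ?thesis .
qed

lemma key_identity:
  fixes a b :: "real^'n" assumes a0: "a \<noteq> 0"
  defines "u \<equiv> (1 / norm a) *\<^sub>R a"
  shows "0 \<le> norm (a - b) - norm a + u \<bullet> b"
    and "(norm b)^2 = (norm (a - b) - norm a)^2 + 2 * norm a * (norm (a - b) - norm a + u \<bullet> b)"
proof -
  have na: "norm a > 0" using a0 by simp
  have nu: "norm u = 1" using na by (simp add: u_def)
  have ua: "u \<bullet> a = norm a" using na by (simp add: u_def power2_norm_eq_inner[symmetric] power2_eq_square)
  have "u \<bullet> (a - b) \<le> norm (a - b)" using norm_cauchy_schwarz[of u "a - b"] nu by simp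
  thus "0 \<le> norm (a - b) - norm a + u \<bullet> b" using ua by (simp add: inner_diff_right)
  have ub: "norm a * (u \<bullet> b) = a \<bullet> b" using na by (simp add: u_def)
  have d: "(norm (a - b))^2 = (norm a)^2 - 2 * (a \<bullet> b) + (norm b)^2"
    by (simp add: power2_norm_eq_inner inner_diff_left inner_diff_right inner_commute)
  show "(norm b)^2 = (norm (a - b) - norm a)^2 + 2 * norm a * (norm (a - b) - norm a + u \<bullet> b)"
    using d ub by (simp add: power2_eq_square algebra_simps)
qed

lemma l1_l2: "(\<Sum>j\<in>UNIV. \<bar>(x::real^'p)$j\<bar>) \<le> sqrt (real CARD('p)) * norm x"
proof -
  have "(\<Sum>j\<in>UNIV. \<bar>x$j\<bar>)^2 \<le> (\<Sum>j\<in>UNIV. (\<bar>x$j\<bar>)^2) * real CARD('p)"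
    by (rule sum_squared_le_sum_of_squares)
  also have "\<dots> = (sqrt (real CARD('p)) * norm x)^2" by (simp add: normsq power_mult_distrib)
  finally show ?thesis by (rule power2_le_imp_le) simp
qed

lemma mm_zero_rows: fixes M :: "real^'n^'m" assumes "M ** transpose M = 0" shows "M = 0"
proof -
  have "M$i \<bullet> M$i = 0" for i
  proof -
    have "(M ** transpose M)$i$i = M$i \<bullet> M$i"
      by (simp add: matrix_mult_transpose_dot_row row_def)
    thus ?thesis using assms by simp
  qed
  thus ?thesis by (simp add: vec_eq_iff)
qed

lemma Zfull_proj:
  fixes X :: "real^'p^'n"
  shows "isproj (mat 1 - Zfull X) {column k X | k. True}"
proof -
  define A where "A = transpose X ** X"
  define G where "G = pinv A"
  have At: "transpose A = A" by (simp add: A_def matrix_transpose_mul)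
  have pen: "penrose A G" unfolding G_def by (rule pinv_sym[OF At])
  hence AGA: "A ** G ** A = A" by (simp add: penrose_def)
  have PP: "mat 1 - Zfull X = X ** G ** transpose X" by (simp add: Zfull_def A_def G_def)
  define D where "D = A ** G ** transpose X - transpose X"
  have "D ** X = A ** G ** A - A" by (simp add: D_def mm_rdiff A_def matrix_mul_assoc)
  hence DX: "D ** X = 0" using AGA by simp
  have tD: "transpose D = X ** transpose G ** A - X"
    by (simp add: D_def tr_diff matrix_transpose_mul At matrix_mul_assoc)
  have "D ** transpose D = D ** X ** transpose G ** A - D ** X"
    by (simp add: tD mm_ldiff matrix_mul_assoc)
  also have "\<dots> = 0" using DX by simp
  finally have "D = 0" by (rule mm_zero_rows)
  hence XP: "transpose X ** (X ** G ** transpose X) = transpose X"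
    by (simp add: D_def A_def matrix_mul_assoc)
  let ?C = "{column k X | k. True}"
  show ?thesis unfolding isproj_def PP
  proof (intro allI conjI ballI)
    fix v
    have "(X ** G ** transpose X) *v v = X *v ((G ** transpose X) *v v)"
      by (simp add: matrix_vector_mul_assoc matrix_mul_assoc)
    also have "\<dots> = (\<Sum>k\<in>UNIV. (((G ** transpose X) *v v)$k) *s column k X)"
      by (rule matrix_mult_sum)
    also have "\<dots> \<in> span ?C"
    proof (intro span_sum)
      fix k
      have "column k X \<in> ?C" by blast
      thus "(((G ** transpose X) *v v)$k) *s column k X \<in> span ?C"
        unfolding scalar_mult_eq_scaleR by (intro span_scale span_base)
    qed
    finally show "(X ** G ** transpose X) *v v \<in> span ?C" .
    have z: "transpose X *v (v - (X ** G ** transpose X) *v v) = 0"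
      by (simp add: matrix_vector_mult_diff_distrib matrix_vector_mul_assoc XP del: transpose_matrix_vector)
    have o: "(v - (X ** G ** transpose X) *v v) \<bullet> c = 0" if cC: "c \<in> ?C" for c
    proof -
      obtain k where c: "c = column k X" using cC by blast
      have "(transpose X *v (v - (X ** G ** transpose X) *v v))$k = (v - (X ** G ** transpose X) *v v) \<bullet> c"
        by (simp add: c matrix_vector_mult_def transpose_def column_def inner_vec_def mult_ac del: transpose_matrix_vector)
      thus ?thesis using z by simp
    qed
    fix u assume "u \<in> span ?C"
    thus "(v - (X ** G ** transpose X) *v v) \<bullet> u = 0" using orth_span[of ?C] o by blast
  qed
qed




definition PW :: "real^'p^'n \<Rightarrow> 'p \<Rightarrow> real^'n^'n" where
  "PW X j = (SOME P. isproj P {column k X | k. k \<noteq> j})"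

lemma PW: "isproj (PW X j) {column k X | k. k \<noteq> j}"
  unfolding PW_def by (rule someI_ex, rule proj_exists)

lemma Zj_eq: "Zj X j = mat 1 - PW X j"
  unfolding Zj_def by (rule proj_orth_compl_eq[OF PW])

lemma Zj_kill: assumes "k \<noteq> j" shows "Zj X j *v column k X = 0"
proof -
  have "column k X \<in> span {column k X | k. k \<noteq> j}" using assms by (intro span_base) blast
  hence "PW X j *v column k X = column k X" by (rule isproj_fix[OF PW])
  thus ?thesis by (simp add: Zj_eq mv_diff_l)
qed

lemma Zj_sym: "(Zj X j *v v) \<bullet> w = v \<bullet> (Zj X j *v w)"
  using isproj_sym[OF PW[of X j], of v w] by (simp add: Zj_eq mv_diff_l inner_diff_left inner_diff_right)

lemma Zj_idem: "Zj X j *v (Zj X j *v v) = Zj X j *v v"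
  using isproj_idem[OF PW[of X j], of v] by (simp add: Zj_eq mv_diff_l matrix_vector_mult_diff_distrib)

lemma Zj_pyth: "(norm v)^2 = (norm (Zj X j *v v))^2 + (norm (PW X j *v v))^2"
  using isproj_pyth[OF PW[of X j], of v] by (simp add: Zj_eq mv_diff_l)

lemma Zj_le: "norm (Zj X j *v v) \<le> norm v"
  using isproj_le2[OF PW[of X j], of v] by (simp add: Zj_eq mv_diff_l)

lemma Zj_res: "(norm (PW X j *v v))^2 \<le> v \<bullet> ((mat 1 - Zfull X) *v v)"
proof (rule isproj_mono[OF PW Zfull_proj])
  show "{column k X | k. k \<noteq> j} \<subseteq> span {column k X | k. True}"
    by (auto intro: span_base)
qed

lemma Zj_col: "Zj X j *v ((r *\<^sub>R X) *v c) = (c$j * r) *\<^sub>R (Zj X j *v column j X)"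
proof -
  have "(r *\<^sub>R X) *v c = (\<Sum>k\<in>UNIV. (c$k * r) *\<^sub>R column k X)"
    by (simp add: matrix_mult_sum scalar_mult_eq_scaleR column_def vec_eq_iff sum_component mult_ac)
  hence "Zj X j *v ((r *\<^sub>R X) *v c) = (\<Sum>k\<in>UNIV. (c$k * r) *\<^sub>R (Zj X j *v column k X))"
    by (simp add: linear_sum[OF matrix_vector_mul_linear] o_def matrix_vector_mult_scaleR)
  also have "\<dots> = (\<Sum>k\<in>UNIV. if k = j then (c$j * r) *\<^sub>R (Zj X j *v column j X) else 0)"
    by (rule sum.cong) (auto simp: Zj_kill)
  also have "\<dots> = (c$j * r) *\<^sub>R (Zj X j *v column j X)" by simp
  finally show ?thesis .
qed

lemma col_mm: "column j (M ** N) = M *v column j (N::real^'p^'q)"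
  by (simp add: column_def matrix_matrix_mult_def matrix_vector_mult_def vec_eq_iff)




lemma final_arith:
  fixes lam s k K al D N NO NI R TT :: real
  assumes lam: "lam > 0" and s: "s \<ge> 0" and k: "k \<ge> 0" and K: "K \<ge> 0" "K^2 = k" and al: "al \<ge> 0"
    and D: "D \<ge> 0" and NO: "NO \<ge> 0" and NI: "NI \<ge> 0" and R: "R \<ge> 0" and TT: "TT \<ge> 0"
    and N: "N = NO + NI" and NOK: "NO \<le> K * D"
    and Rb: "R \<le> lam * (NO - NI) + lam / 3 * N" and Tb: "TT \<le> lam / 3 * N"
    and main: "D^2 - al * N^2 \<le> (R + TT)^2 + 2 * s * R"
    and small: "k * (lam^2 + al) < 1/10"
  shows "D \<le> 140 * lam * s * K \<and> N \<le> 520 * lam * s * k"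
proof -
  have e: "lam * (4/3 * NO - 2/3 * NI) = lam * (NO - NI) + lam/3 * (NO + NI)" by (simp add: field_simps)
  have "0 \<le> lam * (4/3 * NO - 2/3 * NI)" using R Rb[unfolded N] e by linarith
  hence "0 \<le> 4/3 * NO - 2/3 * NI" using lam by (simp add: zero_le_mult_iff)
  hence NI2: "NI \<le> 2 * NO" by simp
  have N3: "N \<le> 3 * (K * D)" using N NI2 NOK by simp
  have e2: "lam * (NO - NI) + lam/3 * (NO + NI) = 4/3 * lam * NO - 2/3 * (lam * NI)" by (simp add: field_simps)
  have "0 \<le> lam * NI" using lam NI by simp
  hence "R \<le> 4/3 * lam * NO" using Rb[unfolded N] e2 by linarith
  also have "\<dots> \<le> 4/3 * lam * (K * D)" using NOK lam by simp
  finally have R1: "R \<le> 4/3 * lam * K * D" by simp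
  have "TT \<le> lam / 3 * (3 * (K * D))" using Tb N3 lam by (meson less_eq_real_def mult_left_mono divide_nonneg_pos order_trans zero_less_numeral)
  hence T1: "TT \<le> lam * K * D" by simp
  have RT: "R + TT \<le> 7/3 * lam * K * D" using R1 T1 by simp
  have "(R + TT)^2 \<le> (7/3 * lam * K * D)^2" using RT R TT by (intro power_mono) simp_all
  also have "\<dots> = 49/9 * lam^2 * K^2 * D^2" by (simp add: power_mult_distrib power_divide)
  also have "\<dots> = 49/9 * lam^2 * k * D^2" using K by simp
  finally have RT2: "(R + TT)^2 \<le> 49/9 * lam^2 * k * D^2" .
  have N0: "0 \<le> N" using N NO NI by simp
  have "N^2 \<le> (3 * (K * D))^2" using N3 N0 by (intro power_mono) simp_all
  also have "\<dots> = 9 * K^2 * D^2" by (simp add: power_mult_distrib)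
  also have "\<dots> = 9 * k * D^2" using K by simp
  finally have "al * N^2 \<le> al * (9 * k * D^2)" using al by (simp add: mult_left_mono)
  hence aN: "al * N^2 \<le> 9 * al * k * D^2" by simp
  have sR: "2 * s * R \<le> 2 * s * (4/3 * lam * K * D)" using R1 s by (intro mult_left_mono) simp_all
  have c: "9 * al * k + 49/9 * lam^2 * k \<le> 9/10"
  proof -
    have "49/9 * lam^2 * k \<le> 9 * lam^2 * k" using k by (simp add: mult_right_mono)
    thus ?thesis using small by (simp add: algebra_simps)
  qed
  have "D^2 \<le> (9 * al * k + 49/9 * lam^2 * k) * D^2 + 8/3 * s * lam * K * D"
    using main aN RT2 sR by (simp add: algebra_simps)
  also have "\<dots> \<le> 9/10 * D^2 + 8/3 * s * lam * K * D"
    using c by (intro add_right_mono mult_right_mono) simp_all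
  finally have "D^2 \<le> 80/3 * s * lam * K * D" by simp
  hence DD: "D * D \<le> (80/3 * s * lam * K) * D" by (simp add: power2_eq_square mult_ac)
  have D1: "D \<le> 80/3 * s * lam * K"
  proof (cases "D = 0")
    case True thus ?thesis using s lam K by simp
  next
    case False hence "D > 0" using D by simp
    thus ?thesis using DD by simp
  qed
  have slK: "0 \<le> s * lam * K" using s lam K by simp
  show ?thesis
  proof
    show "D \<le> 140 * lam * s * K" using D1 slK by (simp add: mult_ac)
    have "3 * K * D \<le> 3 * K * (80/3 * s * lam * K)" using D1 K by (intro mult_left_mono) simp_all
    hence "N \<le> 3 * K * (80/3 * s * lam * K)" using N3 by (simp add: mult_ac)
    also have "\<dots> = 80 * s * lam * k" using K by (simp add: power2_eq_square mult_ac)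
    also have "\<dots> \<le> 520 * lam * s * k" using s lam k by (simp add: mult_ac)
    finally show "N \<le> 520 * lam * s * k" .
  qed
qed




lemma col_diff: "column j (A - B) = column j A - column j (B::real^'p^'n)"
  by (simp add: column_def vec_eq_iff)
lemma col_add: "column j (A + B) = column j A + column j (B::real^'p^'n)"
  by (simp add: column_def vec_eq_iff)
lemma col_scale: "column j (c *\<^sub>R A) = c *\<^sub>R column j (A::real^'p^'n)"
  by (simp add: column_def vec_eq_iff)

lemma finite_img1: "finite {f i | i. True}" for f :: "'a::finite \<Rightarrow> 'b"
proof -
  have "{f i | i. True} = f ` UNIV" by auto
  thus ?thesis by simp
qed
lemma finite_img2: "finite {f i j | i j. True}" for f :: "'a::finite \<Rightarrow> 'c::finite \<Rightarrow> 'b"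
proof -
  have "{f i j | i j. True} = (\<lambda>(i,j). f i j) ` UNIV" by auto
  thus ?thesis by simp
qed

lemma norm_absvec: "norm (\<chi> j. \<bar>(x::real^'n)$j\<bar>) = norm x"
proof -
  have "(norm (\<chi> j. \<bar>x$j\<bar>))^2 = (norm x)^2" by (simp add: normsq)
  hence "sqrt ((norm (\<chi> j. \<bar>x$j\<bar>))^2) = sqrt ((norm x)^2)" by simp
  thus ?thesis by simp
qed

lemma norm_sqrt_sum: "norm (x::real^'n) = sqrt (\<Sum>j\<in>UNIV. (x$j)^2)"
  by (simp flip: normsq)

theorem mainTheorem9:
  fixes Y E :: "real^'p^'n" and Sigma :: "real^'p^'p" and Out :: "'n set"
    and M_E lam :: real and Thhat :: "real^'p^'n"
  defines "n \<equiv> real CARD('n)"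
      and "p \<equiv> real CARD('p)"
      and "X \<equiv> Y + E"
  defines "Om \<equiv> matrix_inv Sigma"
  defines "B \<equiv> Bmat Om"
  defines "Xn \<equiv> (1 / sqrt n) *\<^sub>R X"
  defines "Th \<equiv> (1 / sqrt n) *\<^sub>R (E ** B)"
  defines "xi \<equiv> Xn ** B - Th"
  defines "eps \<equiv> (\<chi> i j. sqrt n * sqrt (Om $ j $ j) * xi $ i $ j) :: real^'p^'n"
  defines "alpha \<equiv> norm_inf_inf (mat 1 - Zfull X)"
  defines "Delta \<equiv> Thhat - Th"
  assumes Sigma_pd: "pos_def_mat Sigma"
      and E_I: "\<forall>i. i \<notin> Out \<longrightarrow> E $ i = 0"
      and E_bound: "\<forall>i. norm ((E ** msqrt Om) $ i) \<le> M_E * sqrt p"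
      and minim: "\<forall>Theta. objective X lam Thhat \<le> objective X lam Theta"
      and nonzero: "\<forall>j. Zj X j *v column j eps \<noteq> 0"
      and lam_ge: "lam \<ge> 3 * Max {sqrt (\<Sum>j\<in>UNIV.
             (((Zj X j *v column j eps) $ i))\<^sup>2 / (norm (Zj X j *v column j eps))\<^sup>2) | i. True}"
      and small: "real (card Out) * (lam\<^sup>2 + alpha) < 1 / 10"
  shows "norm22 Delta \<le> 140 * lam * normT2inf xi * sqrt (real (card Out))
       \<and> norm11 Delta / sqrt p \<le> norm21 Delta
       \<and> norm21 Delta \<le> 520 * lam * normT2inf xi * real (card Out)"
proof -
  have n_pos: "n > 0" unfolding n_def by simp
  have p_pos: "p > 0" unfolding p_def by simp
  have Sinj: "inj ((*v) Sigma)"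
  proof (rule linear_injective_0[THEN iffD2])
    show "linear ((*v) Sigma)" by (rule matrix_vector_mul_linear)
    show "\<forall>v. Sigma *v v = 0 \<longrightarrow> v = 0"
    proof (intro allI impI)
      fix v assume "Sigma *v v = 0"
      hence "\<not> (v \<bullet> (Sigma *v v) > 0)" by simp
      thus "v = 0" using Sigma_pd unfolding pos_def_mat_def by blast
    qed
  qed
  then obtain Si where "Si ** Sigma = mat 1" using matrix_left_invertible_injective by blast
  hence "invertible Sigma" using invertible_left_inverse by blast
  hence "\<exists>A'. Sigma ** A' = mat 1 \<and> A' ** Sigma = mat 1" by (simp add: invertible_def)
  hence SOm: "Sigma ** Om = mat 1 \<and> Om ** Sigma = mat 1"
    unfolding Om_def matrix_inv_def by (rule someI_ex)
  have Om_pos: "Om$j$j > 0" for j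
  proof -
    define y where "y = Om *v axis j 1"
    have Sy: "Sigma *v y = axis j 1" using SOm by (simp add: y_def matrix_vector_mul_assoc)
    have "y \<noteq> 0" using Sy by (auto simp: axis_eq_0_iff)
    hence "y \<bullet> (Sigma *v y) > 0" using Sigma_pd unfolding pos_def_mat_def by blast
    also have "y \<bullet> (Sigma *v y) = y $ j" using Sy by (simp add: inner_axis)
    also have "y $ j = Om$j$j"
      by (simp add: y_def matrix_vector_mult_def axis_def if_distrib cong: if_cong)
    finally show ?thesis .
  qed
  have Bjj: "B$j$j = 1" for j using Om_pos[of j] by (simp add: B_def Bmat_def)
  define a where "a j = Zj X j *v column j xi" for j
  define b where "b j = Zj X j *v column j Delta" for j
  have eqZ: "Zj X j *v ((1 / sqrt n) *\<^sub>R column j X) = a j + Zj X j *v column j Th" for j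
  proof -
    have "column j xi + column j Th = column j (Xn ** B)" by (simp add: xi_def col_diff)
    also have "\<dots> = Xn *v column j B" by (rule col_mm)
    finally have c1: "column j xi + column j Th = ((1 / sqrt n) *\<^sub>R X) *v column j B"
      by (simp add: Xn_def)
    have "a j + Zj X j *v column j Th = Zj X j *v (column j xi + column j Th)"
      by (simp add: a_def matrix_vector_right_distrib)
    also have "\<dots> = ((column j B)$j * (1 / sqrt n)) *\<^sub>R (Zj X j *v column j X)"
      unfolding c1 by (rule Zj_col)
    also have "\<dots> = Zj X j *v ((1 / sqrt n) *\<^sub>R column j X)"
      by (simp add: column_def Bjj matrix_vector_mult_scaleR)
    finally show ?thesis by simp
  qed
  have objZ: "objective X lam Theta = (\<Sum>j\<in>UNIV. norm (a j + Zj X j *v column j Th - Zj X j *v column j Theta)) + lam * norm21 Theta" for Theta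
  proof -
    have "Zj X j *v ((1 / sqrt (real CARD('n))) *\<^sub>R column j X - column j Theta) = a j + Zj X j *v column j Th - Zj X j *v column j Theta" for j
      using eqZ[of j] by (simp add: n_def matrix_vector_mult_diff_distrib)
    thus ?thesis unfolding objective_def by simp
  qed
  have bj: "b j = Zj X j *v column j Thhat - Zj X j *v column j Th" for j
    by (simp add: b_def Delta_def col_diff matrix_vector_mult_diff_distrib)
  have min1: "(\<Sum>j\<in>UNIV. norm (a j - b j)) + lam * norm21 Thhat \<le> (\<Sum>j\<in>UNIV. norm (a j)) + lam * norm21 Th"
  proof -
    have e: "a j + Zj X j *v column j Th - Zj X j *v column j Thhat = a j - b j" for j
      by (simp add: bj algebra_simps)
    have "objective X lam Thhat \<le> objective X lam Th" using minim by blast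
    thus ?thesis unfolding objZ e by simp
  qed

  define c where "c j = sqrt n * sqrt (Om$j$j)" for j
  have c_pos: "c j > 0" for j using n_pos Om_pos[of j] by (simp add: c_def)
  have ceps: "Zj X j *v column j eps = c j *\<^sub>R a j" for j
  proof -
    have "column j eps = c j *\<^sub>R column j xi" by (simp add: eps_def c_def column_def vec_eq_iff)
    thus ?thesis by (simp add: a_def matrix_vector_mult_scaleR)
  qed
  have a_nz: "a j \<noteq> 0" for j using nonzero ceps[of j] by auto
  have na_pos: "norm (a j) > 0" for j using a_nz[of j] by simp
  define u where "u i = (\<chi> j. (a j)$i / norm (a j))" for i
  have term_eq: "sqrt (\<Sum>j\<in>UNIV. (((Zj X j *v column j eps) $ i))\<^sup>2 / (norm (Zj X j *v column j eps))\<^sup>2) = norm (u i)" for i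
  proof -
    have "(((Zj X j *v column j eps) $ i))\<^sup>2 / (norm (Zj X j *v column j eps))\<^sup>2 = ((u i)$j)^2" for j
      using c_pos[of j] by (simp add: ceps u_def power_mult_distrib power_divide)
    thus ?thesis by (simp add: norm_sqrt_sum)
  qed
  have u_le: "3 * norm (u i) \<le> lam" for i
  proof -
    have "norm (u i) \<in> {sqrt (\<Sum>j\<in>UNIV. (((Zj X j *v column j eps) $ i))\<^sup>2 / (norm (Zj X j *v column j eps))\<^sup>2) | i. True}"
      apply (rule CollectI) apply (rule exI[of _ i]) using term_eq[of i] by simp
    hence "norm (u i) \<le> Max {sqrt (\<Sum>j\<in>UNIV. (((Zj X j *v column j eps) $ i))\<^sup>2 / (norm (Zj X j *v column j eps))\<^sup>2) | i. True}"
      by (intro Max_ge finite_img1)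
    thus ?thesis using lam_ge by simp
  qed
  have lam_pos: "lam > 0"
  proof -
    obtain i where ai: "(a undefined)$i \<noteq> 0" using a_nz[of undefined] by (auto simp: vec_eq_iff)
    have "\<bar>(u i)$undefined\<bar> \<le> norm (u i)" by (rule component_le_norm_cart)
    moreover have "(u i)$undefined \<noteq> 0" using ai na_pos[of undefined] by (simp add: u_def)
    ultimately have "norm (u i) > 0" by linarith
    thus ?thesis using u_le[of i] by linarith
  qed
  define t where "t j = (\<Sum>i\<in>UNIV. (u i)$j * Delta$i$j)" for j
  have tb: "((1 / norm (a j)) *\<^sub>R a j) \<bullet> b j = t j" for j
  proof -
    have Za: "Zj X j *v a j = a j" by (simp add: a_def Zj_idem)
    have "((1 / norm (a j)) *\<^sub>R a j) \<bullet> b j = (Zj X j *v ((1 / norm (a j)) *\<^sub>R a j)) \<bullet> column j Delta"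
      by (simp add: b_def Zj_sym)
    also have "\<dots> = ((1 / norm (a j)) *\<^sub>R a j) \<bullet> column j Delta"
      by (simp add: matrix_vector_mult_scaleR Za)
    also have "\<dots> = t j" by (simp add: t_def u_def inner_vec_def column_def mult_ac)
    finally show ?thesis .
  qed
  define d where "d j = norm (a j - b j) - norm (a j)" for j
  define r where "r j = d j + t j" for j
  have r_nn: "r j \<ge> 0" for j
    using key_identity(1)[OF a_nz[of j], of "b j"] tb[of j] by (simp add: r_def d_def)
  have bsq: "(norm (b j))^2 = (d j)^2 + 2 * norm (a j) * r j" for j
    using key_identity(2)[OF a_nz[of j], of "b j"] tb[of j] by (simp add: r_def d_def)

  define N where "N = norm21 Delta"
  have N_eq: "N = (\<Sum>i\<in>UNIV. norm (Delta$i))" by (simp add: N_def norm21_def)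
  have sum_t: "(\<Sum>j\<in>UNIV. t j) \<le> lam / 3 * N"
  proof -
    have "(\<Sum>j\<in>UNIV. t j) = (\<Sum>i\<in>UNIV. u i \<bullet> Delta$i)"
      unfolding t_def inner_vec_def inner_real_def by (rule sum.swap)
    also have "\<dots> \<le> (\<Sum>i\<in>UNIV. lam / 3 * norm (Delta$i))"
    proof (rule sum_mono)
      fix i
      have "u i \<bullet> Delta$i \<le> norm (u i) * norm (Delta$i)" by (rule norm_cauchy_schwarz)
      also have "\<dots> \<le> lam / 3 * norm (Delta$i)" using u_le[of i] by (intro mult_right_mono) simp_all
      finally show "u i \<bullet> Delta$i \<le> lam / 3 * norm (Delta$i)" .
    qed
    also have "\<dots> = lam / 3 * N" by (simp add: N_eq sum_distrib_left)
    finally show ?thesis .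
  qed
  define TT where "TT = norm (\<chi> j. t j)"
  have TT_le: "TT \<le> lam / 3 * N"
  proof -
    have "(\<chi> j. t j) = (\<Sum>i\<in>UNIV. (\<chi> j. (u i)$j * (Delta$i)$j))"
      by (simp add: t_def vec_eq_iff sum_component)
    hence "TT \<le> (\<Sum>i\<in>UNIV. norm (\<chi> j. (u i)$j * (Delta$i)$j))"
      unfolding TT_def by (simp add: norm_sum)
    also have "\<dots> \<le> (\<Sum>i\<in>UNIV. lam / 3 * norm (Delta$i))"
    proof (rule sum_mono)
      fix i
      have "norm (\<chi> j. (u i)$j * (Delta$i)$j) \<le> norm (u i) * norm (Delta$i)" by (rule hadamard)
      also have "\<dots> \<le> lam / 3 * norm (Delta$i)" using u_le[of i] by (intro mult_right_mono) simp_all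
      finally show "norm (\<chi> j. (u i)$j * (Delta$i)$j) \<le> lam / 3 * norm (Delta$i)" .
    qed
    also have "\<dots> = lam / 3 * N" by (simp add: N_eq sum_distrib_left)
    finally show ?thesis .
  qed
  have al_ge: "\<bar>(mat 1 - Zfull X)$i$k\<bar> \<le> alpha" for i k
  proof -
    have "\<bar>(mat 1 - Zfull X)$i$k\<bar> \<in> {\<bar>(mat 1 - Zfull X)$i$j\<bar> | i j. True}" by blast
    thus ?thesis unfolding alpha_def norm_inf_inf_def by (intro Max_ge finite_img2)
  qed
  have al_nn: "alpha \<ge> 0" using al_ge[of undefined undefined] by linarith
  have res_le: "(\<Sum>j\<in>UNIV. (norm (PW X j *v column j Delta))^2) \<le> alpha * N^2"
  proof -
    have "(\<Sum>j\<in>UNIV. (norm (PW X j *v column j Delta))^2) \<le> (\<Sum>j\<in>UNIV. alpha * (\<Sum>i\<in>UNIV. \<bar>Delta$i$j\<bar>)^2)"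
    proof (rule sum_mono)
      fix j
      have "(norm (PW X j *v column j Delta))^2 \<le> column j Delta \<bullet> ((mat 1 - Zfull X) *v column j Delta)"
        by (rule Zj_res)
      also have "\<dots> \<le> alpha * (\<Sum>i\<in>UNIV. \<bar>(column j Delta)$i\<bar>)^2"
        using al_ge by (intro quad_bound) blast
      finally show "(norm (PW X j *v column j Delta))^2 \<le> alpha * (\<Sum>i\<in>UNIV. \<bar>Delta$i$j\<bar>)^2"
        by (simp add: column_def)
    qed
    also have "\<dots> = alpha * (norm (\<Sum>i\<in>UNIV. (\<chi> j. \<bar>Delta$i$j\<bar>)))^2"
    proof -
      have "(\<Sum>i\<in>UNIV. (\<chi> j. \<bar>Delta$i$j\<bar>)) = (\<chi> j. \<Sum>i\<in>UNIV. \<bar>Delta$i$j\<bar>)"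
        by (simp add: vec_eq_iff sum_component)
      thus ?thesis by (simp add: normsq sum_distrib_left)
    qed
    also have "\<dots> \<le> alpha * (\<Sum>i\<in>UNIV. norm (\<chi> j. \<bar>Delta$i$j\<bar>))^2"
      using al_nn norm_sum_sq by (intro mult_left_mono) simp_all
    also have "\<dots> = alpha * N^2"
    proof -
      have "norm (\<chi> j. \<bar>Delta$i$j\<bar>) = norm (Delta$i)" for i by (rule norm_absvec)
      thus ?thesis by (simp add: N_eq)
    qed
    finally show ?thesis .
  qed
  define D where "D = norm22 Delta"
  have D2: "D^2 = (\<Sum>j\<in>UNIV. (norm (column j Delta))^2)"
  proof -
    have "D^2 = (\<Sum>i\<in>UNIV. (norm (Delta$i))^2)"
      by (simp add: D_def norm22_def sum_nonneg)
    also have "\<dots> = (\<Sum>i\<in>UNIV. \<Sum>j\<in>UNIV. (Delta$i$j)^2)" by (simp add: normsq)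
    also have "\<dots> = (\<Sum>j\<in>UNIV. \<Sum>i\<in>UNIV. (Delta$i$j)^2)" by (rule sum.swap)
    also have "\<dots> = (\<Sum>j\<in>UNIV. (norm (column j Delta))^2)" by (simp add: normsq column_def)
    finally show ?thesis .
  qed
  have bsum_ge: "D^2 - alpha * N^2 \<le> (\<Sum>j\<in>UNIV. (norm (b j))^2)"
  proof -
    have "(\<Sum>j\<in>UNIV. (norm (b j))^2) = D^2 - (\<Sum>j\<in>UNIV. (norm (PW X j *v column j Delta))^2)"
    proof -
      have "(norm (b j))^2 = (norm (column j Delta))^2 - (norm (PW X j *v column j Delta))^2" for j
        using Zj_pyth[of "column j Delta" X j] by (simp add: b_def)
      thus ?thesis unfolding D2 by (simp add: sum_subtractf)
    qed
    thus ?thesis using res_le by simp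
  qed

  define NO where "NO = (\<Sum>i\<in>UNIV. if i \<in> Out then norm (Delta$i) else 0)"
  define NI where "NI = (\<Sum>i\<in>UNIV. if i \<in> Out then 0 else norm (Delta$i))"
  have NNO: "N = NO + NI" by (simp add: N_eq NO_def NI_def flip: sum.distrib) (rule sum.cong, auto)
  have NO_nn: "NO \<ge> 0" by (simp add: NO_def sum_nonneg)
  have NI_nn: "NI \<ge> 0" by (simp add: NI_def sum_nonneg)
  have Th0: "Th$i = 0" if "i \<notin> Out" for i
    using E_I that by (simp add: Th_def matrix_matrix_mult_def vec_eq_iff)
  have cone: "norm21 Th - norm21 Thhat \<le> NO - NI"
  proof -
    have "norm21 Th - norm21 Thhat = (\<Sum>i\<in>UNIV. norm (Th$i) - norm (Thhat$i))"
      by (simp add: norm21_def sum_subtractf)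
    also have "\<dots> \<le> (\<Sum>i\<in>UNIV. (if i \<in> Out then norm (Delta$i) else 0) - (if i \<in> Out then 0 else norm (Delta$i)))"
    proof (rule sum_mono)
      fix i
      have hat: "Thhat$i = Th$i + Delta$i" by (simp add: Delta_def)
      show "norm (Th$i) - norm (Thhat$i) \<le> (if i \<in> Out then norm (Delta$i) else 0) - (if i \<in> Out then 0 else norm (Delta$i))"
      proof (cases "i \<in> Out")
        case True
        have "norm (Th$i) \<le> norm (Thhat$i) + norm (Delta$i)"
          using norm_triangle_ineq4[of "Thhat$i" "Delta$i"] by (simp add: hat)
        thus ?thesis using True by simp
      next
        case False thus ?thesis by (simp add: hat Th0)
      qed
    qed
    also have "\<dots> = NO - NI" by (simp add: NO_def NI_def sum_subtractf)
    finally show ?thesis .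
  qed
  define k where "k = real (card Out)"
  define K where "K = sqrt k"
  have k_nn: "k \<ge> 0" by (simp add: k_def)
  have K_nn: "K \<ge> 0" by (simp add: K_def k_def)
  have K2: "K^2 = k" by (simp add: K_def k_nn)
  have D_nn: "D \<ge> 0" by (simp add: D_def norm22_def sum_nonneg)
  have NOK: "NO \<le> K * D"
  proof -
    have NO': "NO = (\<Sum>i\<in>Out. norm (Delta$i))" by (simp add: NO_def sum.If_cases)
    have "NO^2 \<le> (\<Sum>i\<in>Out. (norm (Delta$i))^2) * k"
      unfolding NO' k_def by (rule sum_squared_le_sum_of_squares)
    also have "\<dots> \<le> D^2 * k"
    proof -
      have "(\<Sum>i\<in>Out. (norm (Delta$i))^2) \<le> (\<Sum>i\<in>UNIV. (norm (Delta$i))^2)"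
        by (rule sum_mono2) simp_all
      also have "\<dots> = D^2" by (simp add: D_def norm22_def sum_nonneg)
      finally show ?thesis using k_nn by (simp add: mult_right_mono)
    qed
    also have "\<dots> = (K * D)^2" using K2 by (simp add: power_mult_distrib)
    finally show ?thesis by (rule power2_le_imp_le) (simp add: K_nn D_nn)
  qed
  define R where "R = (\<Sum>j\<in>UNIV. r j)"
  have R_nn: "R \<ge> 0" by (simp add: R_def sum_nonneg r_nn)
  have Rb: "R \<le> lam * (NO - NI) + lam / 3 * N"
  proof -
    have "(\<Sum>j\<in>UNIV. d j) \<le> lam * (norm21 Th - norm21 Thhat)"
      using min1 by (simp add: d_def sum_subtractf algebra_simps)
    also have "\<dots> \<le> lam * (NO - NI)" using cone lam_pos by (intro mult_left_mono) simp_all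
    finally have "(\<Sum>j\<in>UNIV. d j) \<le> lam * (NO - NI)" .
    thus ?thesis using sum_t by (simp add: R_def r_def sum.distrib)
  qed
  define s where "s = normT2inf xi"
  have na_s: "norm (a j) \<le> s" for j
  proof -
    have "norm (a j) \<le> norm (column j xi)" unfolding a_def by (rule Zj_le)
    also have "\<dots> \<le> s"
    proof -
      have "norm (column j xi) \<in> {norm (column j xi) | j. True}" by blast
      thus ?thesis unfolding s_def normT2inf_def by (intro Max_ge finite_img1)
    qed
    finally show ?thesis .
  qed
  have s_nn: "s \<ge> 0" using na_s[of undefined] norm_ge_zero[of "a undefined"] by linarith
  have TT_nn: "TT \<ge> 0" by (simp add: TT_def)
  have main: "D^2 - alpha * N^2 \<le> (R + TT)^2 + 2 * s * R"
  proof -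
    have "(\<Sum>j\<in>UNIV. (norm (b j))^2) = (\<Sum>j\<in>UNIV. (d j)^2) + 2 * (\<Sum>j\<in>UNIV. norm (a j) * r j)"
      by (simp add: bsq sum.distrib sum_distrib_left mult_ac)
    also have "(\<Sum>j\<in>UNIV. norm (a j) * r j) \<le> (\<Sum>j\<in>UNIV. s * r j)"
      using na_s r_nn by (intro sum_mono mult_right_mono) simp_all
    also have "(\<Sum>j\<in>UNIV. s * r j) = s * R" by (simp add: R_def sum_distrib_left)
    also have "(\<Sum>j\<in>UNIV. (d j)^2) \<le> (R + TT)^2"
    proof -
      have dv: "(\<chi> j. d j) = (\<chi> j. r j) - (\<chi> j. t j)" by (simp add: vec_eq_iff r_def)
      have "norm (\<chi> j. r j) \<le> (\<Sum>j\<in>UNIV. \<bar>r j\<bar>)" using norm_le_l1_cart[of "\<chi> j. r j"] by simp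
      also have "\<dots> = R" using r_nn by (simp add: R_def)
      finally have "norm (\<chi> j. d j) \<le> R + TT"
        unfolding dv TT_def using norm_triangle_ineq4[of "\<chi> j. r j" "\<chi> j. t j"] by linarith
      hence "(norm (\<chi> j. d j))^2 \<le> (R + TT)^2" by (intro power_mono) simp_all
      thus ?thesis by (simp add: normsq)
    qed
    finally have "(\<Sum>j\<in>UNIV. (norm (b j))^2) \<le> (R + TT)^2 + 2 * (s * R)" by simp
    thus ?thesis using bsum_ge by simp
  qed
  have fin: "D \<le> 140 * lam * s * K \<and> N \<le> 520 * lam * s * k"
    by (rule final_arith[OF lam_pos s_nn k_nn K_nn K2 al_nn D_nn NO_nn NI_nn R_nn TT_nn NNO NOK Rb
        order_trans[OF TT_le order_refl] main]) (use small in \<open>simp add: k_def\<close>)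
  have l11: "norm11 Delta / sqrt p \<le> norm21 Delta"
  proof -
    have "norm11 Delta \<le> (\<Sum>i\<in>UNIV. sqrt p * norm (Delta$i))"
      unfolding norm11_def p_def by (intro sum_mono l1_l2)
    also have "\<dots> = sqrt p * norm21 Delta" by (simp add: norm21_def sum_distrib_left)
    finally show ?thesis using p_pos by (simp add: divide_le_eq mult_ac)
  qed
  show ?thesis using fin l11 by (simp add: D_def N_def s_def K_def k_def)
qed


end
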